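(* If $\mathfrak b\leq\mathfrak{ss}_{i,o}$, then $\mathfrak{ss}_{i,o}=\mathfrak{ss}_o$. Dually, if $\mathfrak d\geq\mathfrak{ss}_{i,o}^\perp$, then $\mathfrak{ss}_{i,o}^\perp=\mathfrak{ss}_o^\perp$.
   Context: Let $\mathfrak S_{cc}$ be the set of all sequences $\mathbf a=\langle a_i:i\in\omega\rangle$ of rational numbers with $a_i\to0$ such that $\sum_i a_i$ is conditionally convergent (converges to a real number, with the positive terms summing to $+\infty$ and the negative terms to $-\infty$). Let $[\omega]^\omega_\omega$ be the set of infinite coinfinite subsets of $\omega$; for such $X$ with increasing enumeration $\langle i_n\rangle$, $\sum_X\mathbf a$ denotes $\sum_n a_{i_n}$. A series diverges if it does not converge to a real number; it diverges by oscillation if its partial sums do not have a unique accumulation point in $\mathbb R\cup\{+\infty,-\infty\}$ (here $\pm\infty$ counts as an accumulation point when the partial sums are unbounded above, resp. below). $\mathfrak{ss}_{i,o}$ (resp. $\mathfrak{ss}_o$) is the least cardinality of $\mathcal X\subseteq[\omega]^\omega_\omega$ such that every $\mathbf a\in\mathfrak S_{cc}$ has some $X\in\mathcal X$ with $\sum_X\mathbf a$ divergent (resp. divergent by oscillation); $\mathfrak{ss}_{i,o}^\perp$ (resp. $\mathfrak{ss}_o^\perp$) is the least cardinality of $\mathcal A\subseteq\mathfrak S_{cc}$ such that no $X\in[\omega]^\omega_\omega$ makes $\sum_X\mathbf a$ divergent (resp. divergent by oscillation) for all $\mathbf a\in\mathcal A$. $\mathfrak b$, $\mathfrak d$ are the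 bounding and dominating numbers. *)

theory Defs
  imports "HOL-Analysis.Analysis" "HOL-Library.Infinite_Set"
begin

(* Minimal cardinality (as a cardinal = well-order relation, up to ordIso) of a set
   satisfying P: the cardinal |A| of some A with P A such that |A| \<le>o |B| for all B with P B. *)
definition mincard :: "('a set \<Rightarrow> bool) \<Rightarrow> 'a rel" where
  "mincard P = (SOME r. \<exists>A. P A \<and> r = card_of A \<and> (\<forall>B. P B \<longrightarrow> (card_of A, card_of B) \<in> ordLeq))"

definition infcoinf :: "nat set set" where
  "infcoinf = {X. infinite X \<and> infinite (- X)}"

definition Scc :: "(nat \<Rightarrow> rat) set" where
  "Scc = {a. (\<lambda>i. real_of_rat (a i)) \<longlonglongrightarrow> 0
            \<and> summable (\<lambda>i. real_of_rat (a i))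
            \<and> \<not> summable (\<lambda>i. max 0 (real_of_rat (a i)))
            \<and> \<not> summable (\<lambda>i. min 0 (real_of_rat (a i)))}"

definition subseq_terms :: "nat set \<Rightarrow> (nat \<Rightarrow> rat) \<Rightarrow> nat \<Rightarrow> real" where
  "subseq_terms X a = (\<lambda>n. real_of_rat (a (enumerate X n)))"

definition partial_sums :: "(nat \<Rightarrow> real) \<Rightarrow> nat \<Rightarrow> real" where
  "partial_sums f = (\<lambda>n. \<Sum>k<n. f k)"

definition sub_diverges :: "nat set \<Rightarrow> (nat \<Rightarrow> rat) \<Rightarrow> bool" where
  "sub_diverges X a \<longleftrightarrow> \<not> summable (subseq_terms X a)"

definition acc_point :: "(nat \<Rightarrow> real) \<Rightarrow> ereal \<Rightarrow> bool" where
  "acc_point s L \<longleftrightarrow> (\<forall>U. open U \<and> L \<in> U \<longrightarrow> (\<exists>\<^sub>F n in sequentially. ereal (s n) \<in> U))"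

(* divergent by oscillation: partial sums lack a unique accumulation point in [-oo,+oo] *)
definition sub_osc :: "nat set \<Rightarrow> (nat \<Rightarrow> rat) \<Rightarrow> bool" where
  "sub_osc X a \<longleftrightarrow> \<not> (\<exists>!L. acc_point (partial_sums (subseq_terms X a)) L)"

definition ss_io :: "nat set rel" where
  "ss_io = mincard (\<lambda>\<X>. \<X> \<subseteq> infcoinf \<and> (\<forall>a\<in>Scc. \<exists>X\<in>\<X>. sub_diverges X a))"

definition ss_o :: "nat set rel" where
  "ss_o = mincard (\<lambda>\<X>. \<X> \<subseteq> infcoinf \<and> (\<forall>a\<in>Scc. \<exists>X\<in>\<X>. sub_osc X a))"

definition ss_io_perp :: "(nat \<Rightarrow> rat) rel" where
  "ss_io_perp = mincard (\<lambda>\<A>. \<A> \<subseteq> Scc \<and> \<not> (\<exists>X\<in>infcoinf. \<forall>a\<in>\<A>. sub_diverges X a))"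

definition ss_o_perp :: "(nat \<Rightarrow> rat) rel" where
  "ss_o_perp = mincard (\<lambda>\<A>. \<A> \<subseteq> Scc \<and> \<not> (\<exists>X\<in>infcoinf. \<forall>a\<in>\<A>. sub_osc X a))"

definition le_star :: "(nat \<Rightarrow> nat) \<Rightarrow> (nat \<Rightarrow> nat) \<Rightarrow> bool" where
  "le_star f g \<longleftrightarrow> (\<forall>\<^sub>F n in sequentially. f n \<le> g n)"

definition bnum :: "(nat \<Rightarrow> nat) rel" where
  "bnum = mincard (\<lambda>F. \<not> (\<exists>g. \<forall>f\<in>F. le_star f g))"

definition dnum :: "(nat \<Rightarrow> nat) rel" where
  "dnum = mincard (\<lambda>F. \<forall>g. \<exists>f\<in>F. le_star g f)"

end

theory Submission
  imports Defs
begin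

definition TT :: "nat set \<Rightarrow> (nat \<Rightarrow> rat) \<Rightarrow> nat \<Rightarrow> real" where
  "TT Y a N = (\<Sum>i<N. if i \<in> Y then real_of_rat (a i) else 0)"

lemma cnt_enum:
  assumes "infinite (Y::nat set)"
  shows "card {i\<in>Y. i < enumerate Y n} = n"
proof -
  have "{i\<in>Y. i < enumerate Y n} = enumerate Y ` {..<n}"
  proof
    show "{i \<in> Y. i < enumerate Y n} \<subseteq> enumerate Y ` {..<n}"
    proof
      fix i assume "i \<in> {i \<in> Y. i < enumerate Y n}"
      then have i: "i \<in> Y" "i < enumerate Y n" by auto
      obtain k where k: "enumerate Y k = i" using enumerate_Ex[OF assms i(1)] by blast
      then have "k < n" using i(2) assms by (metis enumerate_mono_iff)
      then show "i \<in> enumerate Y ` {..<n}" using k by auto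
    qed
  next
    show "enumerate Y ` {..<n} \<subseteq> {i \<in> Y. i < enumerate Y n}"
      using assms by (auto simp: enumerate_in_set)
  qed
  moreover have "inj_on (enumerate Y) {..<n}"
    by (rule inj_on_subset[OF inj_enumerate[OF assms]]) simp
  ultimately show ?thesis by (simp add: card_image)
qed

lemma TT_enum:
  assumes "infinite (Y::nat set)"
  shows "TT Y a N = partial_sums (subseq_terms Y a) (card {i\<in>Y. i < N})"
proof (induction N)
  case 0
  then show ?case by (simp add: TT_def partial_sums_def)
next
  case (Suc N)
  show ?case
  proof (cases "N \<in> Y")
    case True
    obtain k where k: "enumerate Y k = N" using enumerate_Ex[OF assms True] by blast
    have c: "card {i\<in>Y. i < N} = k" using cnt_enum[OF assms, of k] k by simp
    have "{i\<in>Y. i < Suc N} = insert N {i\<in>Y. i < N}" using True by auto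
    then have "card {i\<in>Y. i < Suc N} = Suc k" using c by simp
    then show ?thesis using Suc True c k
      by (simp add: TT_def partial_sums_def subseq_terms_def)
  next
    case False
    have "{i\<in>Y. i < Suc N} = {i\<in>Y. i < N}" using False less_Suc_eq by auto
    then show ?thesis using Suc False by (simp add: TT_def)
  qed
qed

lemma TT_at_enum:
  assumes "infinite (Y::nat set)"
  shows "TT Y a (enumerate Y n) = partial_sums (subseq_terms Y a) n"
  using TT_enum[OF assms] cnt_enum[OF assms] by simp


lemma acc_point_subseq:
  assumes r: "strict_mono r" and lim: "(\<lambda>n. ereal (s (r n))) \<longlonglongrightarrow> L"
  shows "acc_point s L"
  unfolding acc_point_def
proof (intro allI impI)
  fix U :: "ereal set" assume U: "open U \<and> L \<in> U"
  then have ev: "eventually (\<lambda>n. ereal (s (r n)) \<in> U) sequentially"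
    using lim topological_tendstoD by blast
  then obtain M where M: "\<And>n. n \<ge> M \<Longrightarrow> ereal (s (r n)) \<in> U"
    by (auto simp: eventually_sequentially)
  show "\<exists>\<^sub>F n in sequentially. ereal (s n) \<in> U"
    unfolding frequently_sequentially
  proof
    fix N
    have "r (max N M) \<ge> N" using seq_suble[OF r, of "max N M"] by simp
    moreover have "ereal (s (r (max N M))) \<in> U" using M by simp
    ultimately show "\<exists>n\<ge>N. ereal (s n) \<in> U" by blast
  qed
qed

lemma freq_subseq:
  fixes P :: "nat \<Rightarrow> bool"
  assumes "\<exists>\<^sub>F n in sequentially. P n"
  shows "\<exists>r::nat\<Rightarrow>nat. strict_mono r \<and> (\<forall>n. P (r n))"
proof -
  have "infinite {n. P n}"
    using assms by (simp add: frequently_sequentially infinite_nat_iff_unbounded_le)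
  then show ?thesis using infinite_enumerate by blast
qed

lemma acc_point_ge:
  fixes s :: "nat \<Rightarrow> real"
  assumes "\<exists>\<^sub>F n in sequentially. c \<le> s n"
  shows "\<exists>L. acc_point s L \<and> ereal c \<le> L"
proof -
  obtain r :: "nat \<Rightarrow> nat" where r: "strict_mono r" "\<And>n. c \<le> s (r n)" using freq_subseq[OF assms] by blast
  define v where "v = (\<lambda>n. ereal (s (r n)))"
  obtain q where q: "strict_mono q" "(v \<circ> q) \<longlonglongrightarrow> limsup v"
    using limsup_subseq_lim by blast
  have "ereal c \<le> limsup v"
    using q(2) by (rule LIMSEQ_le_const) (auto simp: v_def r(2))
  moreover have "acc_point s (limsup v)"
    using q r(1) by (intro acc_point_subseq[of "r \<circ> q"]) (auto simp: v_def o_def intro: strict_mono_o[unfolded o_def])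
  ultimately show ?thesis by blast
qed

lemma acc_point_le:
  fixes s :: "nat \<Rightarrow> real"
  assumes "\<exists>\<^sub>F n in sequentially. s n \<le> c"
  shows "\<exists>L. acc_point s L \<and> L \<le> ereal c"
proof -
  obtain r :: "nat \<Rightarrow> nat" where r: "strict_mono r" "\<And>n. s (r n) \<le> c" using freq_subseq[OF assms] by blast
  define v where "v = (\<lambda>n. ereal (s (r n)))"
  obtain q where q: "strict_mono q" "(v \<circ> q) \<longlonglongrightarrow> limsup v"
    using limsup_subseq_lim by blast
  have "limsup v \<le> ereal c"
    using q(2) by (rule LIMSEQ_le_const2) (auto simp: v_def r(2))
  moreover have "acc_point s (limsup v)"
    using q r(1) by (intro acc_point_subseq[of "r \<circ> q"]) (auto simp: v_def o_def intro: strict_mono_o[unfolded o_def])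
  ultimately show ?thesis by blast
qed

lemma osc_from_freq:
  fixes s :: "nat \<Rightarrow> real"
  assumes "\<exists>\<^sub>F n in sequentially. 1 \<le> s n" "\<exists>\<^sub>F n in sequentially. s n \<le> -1"
  shows "\<not> (\<exists>!L. acc_point s L)"
proof -
  obtain L1 where L1: "acc_point s L1" "ereal 1 \<le> L1" using acc_point_ge[OF assms(1)] by blast
  obtain L2 where L2: "acc_point s L2" "L2 \<le> ereal (-1)" using acc_point_le[OF assms(2)] by blast
  have "ereal (-1) < ereal 1" by simp
  then have "L2 < L1" using L1(2) L2(2) by (meson le_less_trans less_le_trans)
  then have "L1 \<noteq> L2" by simp
  then show ?thesis using L1 L2 by blast
qed

lemma summable_unique_acc:
  assumes "summable f"
  shows "\<exists>!L. acc_point (partial_sums f) L"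
proof -
  obtain s where "f sums s" using assms summable_def by blast
  then have lim: "partial_sums f \<longlonglongrightarrow> s" by (simp add: sums_def partial_sums_def)
  then have elim: "(\<lambda>n. ereal (partial_sums f n)) \<longlonglongrightarrow> ereal s" by simp
  have "acc_point (partial_sums f) (ereal s)"
    using acc_point_subseq[OF strict_mono_id, of "partial_sums f" "ereal s"] elim by simp
  moreover have "L = ereal s" if "acc_point (partial_sums f) L" for L
  proof (rule ccontr)
    assume "L \<noteq> ereal s"
    then obtain U V where UV: "open U" "open V" "L \<in> U" "ereal s \<in> V" "U \<inter> V = {}"
      using separation_t2[of L "ereal s"] by metis
    have "eventually (\<lambda>n. ereal (partial_sums f n) \<in> V) sequentially"
      by (rule topological_tendstoD[OF elim UV(2,4)])
    then have "eventually (\<lambda>n. ereal (partial_sums f n) \<notin> U) sequentially"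
      by (rule eventually_mono) (use UV(5) in auto)
    moreover have "\<exists>\<^sub>F n in sequentially. ereal (partial_sums f n) \<in> U"
      using that UV(1,3) unfolding acc_point_def by simp
    ultimately show False by (simp add: not_frequently[symmetric])
  qed
  ultimately show ?thesis by (intro ex1I[of _ "ereal s"])
qed

lemma osc_imp_div: "sub_osc X a \<Longrightarrow> sub_diverges X a"
  unfolding sub_osc_def sub_diverges_def using summable_unique_acc by metis


definition SS :: "(nat \<Rightarrow> rat) \<Rightarrow> nat \<Rightarrow> real" where
  "SS a N = (\<Sum>i<N. real_of_rat (a i))"

lemma TT_compl: "TT Y a N + TT (- Y) a N = SS a N"
  unfolding TT_def SS_def by (induction N) auto

lemma TT_Suc: "TT Y a (Suc N) = TT Y a N + (if N \<in> Y then real_of_rat (a N) else 0)"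
  unfolding TT_def by simp

lemma TT_const:
  assumes "Y \<subseteq> {..<B}" "B \<le> N"
  shows "TT Y a N = TT Y a B"
  using assms(2)
proof (induction N rule: dec_induct)
  case base
  then show ?case by simp
next
  case (step n)
  then have "n \<notin> Y" using assms(1) by auto
  then show ?case using step by (simp add: TT_Suc)
qed

lemma freq_transfer:
  assumes "infinite Y" "\<exists>\<^sub>F N in sequentially. Q (TT Y a N)"
  shows "\<exists>\<^sub>F n in sequentially. Q (partial_sums (subseq_terms Y a) n)"
  unfolding frequently_sequentially
proof
  fix n0
  obtain N where N: "N \<ge> enumerate Y n0" "Q (TT Y a N)"
    using assms(2) unfolding frequently_sequentially by blast
  have "{i\<in>Y. i < enumerate Y n0} \<subseteq> {i\<in>Y. i < N}" using N(1) by auto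
  then have "card {i\<in>Y. i < enumerate Y n0} \<le> card {i\<in>Y. i < N}"
    by (intro card_mono) auto
  then have "n0 \<le> card {i\<in>Y. i < N}" using cnt_enum[OF assms(1)] by simp
  moreover have "Q (partial_sums (subseq_terms Y a) (card {i\<in>Y. i < N}))"
    using N(2) TT_enum[OF assms(1)] by simp
  ultimately show "\<exists>n\<ge>n0. Q (partial_sums (subseq_terms Y a) n)" by blast
qed

lemma finite_bound: "finite (Y::nat set) \<Longrightarrow> \<exists>B. Y \<subseteq> {..<B}"
  by (meson finite_nat_bounded)

lemma final_osc:
  assumes sa: "summable (\<lambda>i. real_of_rat (a i))"
    and f1: "\<exists>\<^sub>F N in sequentially. 1 \<le> TT Y a N"
    and f2: "\<exists>\<^sub>F N in sequentially. TT Y a N \<le> -1"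
  shows "Y \<in> infcoinf \<and> sub_osc Y a"
proof -
  have infY: "infinite Y"
  proof
    assume "finite Y"
    then obtain B where B: "Y \<subseteq> {..<B}" using finite_bound by blast
    obtain N1 where N1: "N1 \<ge> B" "1 \<le> TT Y a N1" using f1 unfolding frequently_sequentially by blast
    obtain N2 where N2: "N2 \<ge> B" "TT Y a N2 \<le> -1" using f2 unfolding frequently_sequentially by blast
    show False using N1 N2 TT_const[OF B N1(1)] TT_const[OF B N2(1)] by simp
  qed
  have infC: "infinite (- Y)"
  proof
    assume "finite (- Y)"
    then obtain B where B: "- Y \<subseteq> {..<B}" using finite_bound by blast
    obtain s where s: "(\<lambda>i. real_of_rat (a i)) sums s" using sa summable_def by blast
    then have "SS a \<longlonglongrightarrow> s" by (simp add: sums_def SS_def[abs_def])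
    then have lim: "(\<lambda>N. SS a N - TT (- Y) a B) \<longlonglongrightarrow> s - TT (- Y) a B"
      by (intro tendsto_intros)
    have ev: "eventually (\<lambda>N. TT Y a N = SS a N - TT (- Y) a B) sequentially"
      unfolding eventually_sequentially
      using TT_compl[of Y a] TT_const[OF B] by (metis add_diff_cancel_right')
    have lim2: "TT Y a \<longlonglongrightarrow> s - TT (- Y) a B"
      using tendsto_cong[OF ev] lim by simp
    define L where "L = s - TT (- Y) a B"
    have "eventually (\<lambda>N. dist (TT Y a N) L < 1) sequentially"
      using lim2 unfolding L_def by (rule tendstoD) simp
    then obtain M where M: "\<And>N. N \<ge> M \<Longrightarrow> dist (TT Y a N) L < 1"
      by (auto simp: eventually_sequentially)
    obtain N1 where N1: "N1 \<ge> M" "1 \<le> TT Y a N1" using f1 unfolding frequently_sequentially by blast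
    obtain N2 where N2: "N2 \<ge> M" "TT Y a N2 \<le> -1" using f2 unfolding frequently_sequentially by blast
    show False using M[OF N1(1)] M[OF N2(1)] N1(2) N2(2) by (simp add: dist_real_def abs_less_iff)
  qed
  have "sub_osc Y a"
    unfolding sub_osc_def
    by (rule osc_from_freq[OF freq_transfer[OF infY f1] freq_transfer[OF infY f2]])
  then show ?thesis using infY infC by (simp add: infcoinf_def)
qed

definition neg :: "(nat \<Rightarrow> rat) \<Rightarrow> nat \<Rightarrow> rat" where
  "neg a = (\<lambda>i. - a i)"

lemma TT_neg: "TT Y (neg a) N = - TT Y a N"
  unfolding TT_def neg_def sum_negf[symmetric] by (rule sum.cong) (auto simp: of_rat_minus)

lemma Scc_neg:
  assumes "a \<in> Scc" shows "neg a \<in> Scc"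
proof -
  have e1: "(\<lambda>i. max 0 (real_of_rat (neg a i))) = (\<lambda>i. - min 0 (real_of_rat (a i)))"
    by (auto simp: neg_def of_rat_minus fun_eq_iff)
  have e2: "(\<lambda>i. min 0 (real_of_rat (neg a i))) = (\<lambda>i. - max 0 (real_of_rat (a i)))"
    by (auto simp: neg_def of_rat_minus fun_eq_iff)
  have e3: "(\<lambda>i. real_of_rat (neg a i)) = (\<lambda>i. - real_of_rat (a i))"
    by (auto simp: neg_def of_rat_minus)
  show ?thesis using assms unfolding Scc_def
    by (simp only: mem_Collect_eq e1 e2 e3 summable_minus_iff) (auto intro: tendsto_minus_cancel simp: tendsto_minus_cancel_left)
qed


definition aEg :: "nat set \<Rightarrow> (nat \<Rightarrow> rat) \<Rightarrow> nat \<Rightarrow> rat" where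
  "aEg E h i = (if i \<in> E then h (card {j\<in>E. j < i}) else 0)"

definition h0 :: "nat \<Rightarrow> rat" where
  "h0 k = (-1)^k / of_nat (Suc k)"

lemma aEg_sum:
  assumes E: "infinite E"
  shows "(\<Sum>i<N. real_of_rat (aEg E h i)) = (\<Sum>k<card {j\<in>E. j < N}. real_of_rat (h k))"
proof -
  have "(\<Sum>i<N. real_of_rat (aEg E h i)) = TT E (aEg E h) N"
    unfolding TT_def by (rule sum.cong) (auto simp: aEg_def)
  also have "\<dots> = partial_sums (subseq_terms E (aEg E h)) (card {j\<in>E. j < N})"
    by (rule TT_enum[OF E])
  also have "\<dots> = (\<Sum>k<card {j\<in>E. j < N}. real_of_rat (h k))"
    unfolding partial_sums_def subseq_terms_def
    by (rule sum.cong) (auto simp: aEg_def enumerate_in_set[OF E] cnt_enum[OF E])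
  finally show ?thesis .
qed

lemma cnt_tendsto:
  assumes E: "infinite (E::nat set)"
  shows "filterlim (\<lambda>N. card {j\<in>E. j < N}) at_top sequentially"
  unfolding filterlim_at_top eventually_sequentially
proof (intro allI exI impI allI)
  fix n N assume "enumerate E n \<le> N"
  then have "{j\<in>E. j < enumerate E n} \<subseteq> {j\<in>E. j < N}" by auto
  then have "card {j\<in>E. j < enumerate E n} \<le> card {j\<in>E. j < N}" by (intro card_mono) auto
  then show "n \<le> card {j\<in>E. j < N}" using cnt_enum[OF E] by simp
qed

lemma of_rat_max0: "real_of_rat (max 0 q) = max 0 (real_of_rat q)"
  by (auto simp: max_def)

lemma of_rat_min0: "real_of_rat (min 0 q) = min 0 (real_of_rat q)"
  by (auto simp: min_def)

lemma aEg_max: "(\<lambda>i. max 0 (real_of_rat (aEg E h i))) = (\<lambda>i. real_of_rat (aEg E (\<lambda>k. max 0 (h k)) i))"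
  by (auto simp: aEg_def fun_eq_iff of_rat_max0)

lemma aEg_min: "(\<lambda>i. min 0 (real_of_rat (aEg E h i))) = (\<lambda>i. real_of_rat (aEg E (\<lambda>k. min 0 (h k)) i))"
  by (auto simp: aEg_def fun_eq_iff of_rat_min0)

lemma aEg_summable:
  assumes E: "infinite E" and s: "summable (\<lambda>k. real_of_rat (h k))"
  shows "summable (\<lambda>i. real_of_rat (aEg E h i))"
proof -
  obtain l where l: "(\<lambda>k. real_of_rat (h k)) sums l" using s summable_def by blast
  then have "(\<lambda>n. \<Sum>k<n. real_of_rat (h k)) \<longlonglongrightarrow> l" by (simp add: sums_def)
  then have "(\<lambda>N. \<Sum>k<card {j\<in>E. j < N}. real_of_rat (h k)) \<longlonglongrightarrow> l"
    by (rule filterlim_compose[OF _ cnt_tendsto[OF E]])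
  then have "(\<lambda>i. real_of_rat (aEg E h i)) sums l"
    unfolding sums_def aEg_sum[OF E] .
  then show ?thesis by (simp add: summable_def) blast
qed

lemma aEg_not_summable:
  assumes E: "infinite E" and nn: "\<And>k. 0 \<le> real_of_rat (h k)"
    and ns: "\<not> summable (\<lambda>k. real_of_rat (h k))"
  shows "\<not> summable (\<lambda>i. real_of_rat (aEg E h i))"
proof
  assume sm: "summable (\<lambda>i. real_of_rat (aEg E h i))"
  have nn2: "\<And>i. 0 \<le> real_of_rat (aEg E h i)" using nn by (simp add: aEg_def)
  have nn3: "\<And>i. 0 \<le> aEg E h i" using nn2 by simp
  have "(\<Sum>k\<le>n. real_of_rat (h k)) \<le> (\<Sum>i. real_of_rat (aEg E h i))" for n
  proof -
    have "(\<Sum>k\<le>n. real_of_rat (h k)) = (\<Sum>k<Suc n. real_of_rat (h k))"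
      by (simp add: lessThan_Suc_atMost)
    also have "\<dots> = (\<Sum>i<enumerate E (Suc n). real_of_rat (aEg E h i))"
      using aEg_sum[OF E, of h "enumerate E (Suc n)"] cnt_enum[OF E] by simp
    also have "\<dots> \<le> (\<Sum>i. real_of_rat (aEg E h i))"
      by (rule sum_le_suminf[OF sm]) (auto simp: nn3)
    finally show ?thesis .
  qed
  then have "summable (\<lambda>k. real_of_rat (h k))"
    by (intro bounded_imp_summable[OF nn]) 
  then show False using ns by simp
qed

lemma h0_real: "real_of_rat (h0 k) = (-1)^k * (1 / real (Suc k))"
  unfolding h0_def by (simp add: of_rat_divide of_rat_power of_rat_add)

lemma h0_summable: "summable (\<lambda>k. real_of_rat (h0 k))"
proof -
  have "(\<lambda>n. 1 / real (Suc n)) \<longlonglongrightarrow> 0"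
    using LIMSEQ_inverse_real_of_nat by (simp add: divide_inverse)
  then show ?thesis
    unfolding h0_real
    by (rule summable_Leibniz'(1)) (auto intro!: frac_le)
qed


lemma h0_max: "real_of_rat (max 0 (h0 k)) = (if even k then 1 / real (Suc k) else 0)"
  by (simp add: of_rat_max0 h0_real)

lemma h0_min: "real_of_rat (min 0 (h0 k)) = (if even k then 0 else - (1 / real (Suc k)))"
  by (simp add: of_rat_min0 h0_real)

lemma harm_not_summable: "\<not> summable (\<lambda>n. 1 / real (Suc n))"
  using not_summable_harmonic[where 'a=real] summable_Suc_iff[where f="\<lambda>n. inverse (real n)"]
  by (simp add: divide_inverse)

lemma h0_max_ns: "\<not> summable (\<lambda>k. real_of_rat (max 0 (h0 k)))"
proof
  assume "summable (\<lambda>k. real_of_rat (max 0 (h0 k)))"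
  then obtain l where "(\<lambda>k. real_of_rat (max 0 (h0 k))) sums l" by (auto simp: summable_def)
  from sums_group[OF this, of 2]
  have "summable (\<lambda>n. \<Sum>k\<in>{n*2..<n*2+2}. real_of_rat (max 0 (h0 k)))"
    by (auto simp: summable_def)
  moreover have "(\<Sum>k\<in>{n*2..<n*2+2}. real_of_rat (max 0 (h0 k))) = 1 / real (Suc (2*n))" for n
  proof -
    have "{n*2..<n*2+2} = {2*n, Suc (2*n)}" by auto
    then show ?thesis by (simp add: h0_max)
  qed
  ultimately have s: "summable (\<lambda>n. 1 / real (Suc (2*n)))" by simp
  have "summable (\<lambda>n. 1 / real (Suc n))"
  proof (rule summable_comparison_test'[where g="\<lambda>n. 2 * (1 / real (Suc (2*n)))"])
    show "summable (\<lambda>n. 2 * (1 / real (Suc (2*n))))" using s by (rule summable_mult)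
    fix n :: nat
    show "norm (1 / real (Suc n)) \<le> 2 * (1 / real (Suc (2*n)))"
      by (simp add: field_simps)
  qed
  then show False using harm_not_summable by simp
qed

lemma h0_min_ns: "\<not> summable (\<lambda>k. real_of_rat (min 0 (h0 k)))"
proof
  assume "summable (\<lambda>k. real_of_rat (min 0 (h0 k)))"
  then have "summable (\<lambda>k. - real_of_rat (min 0 (h0 k)))" by (rule summable_minus)
  then obtain l where "(\<lambda>k. - real_of_rat (min 0 (h0 k))) sums l" by (auto simp: summable_def)
  from sums_group[OF this, of 2]
  have "summable (\<lambda>n. \<Sum>k\<in>{n*2..<n*2+2}. - real_of_rat (min 0 (h0 k)))"
    by (auto simp: summable_def)
  moreover have "(\<Sum>k\<in>{n*2..<n*2+2}. - real_of_rat (min 0 (h0 k))) = 1 / real (Suc (Suc (2*n)))" for n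
  proof -
    have "{n*2..<n*2+2} = {2*n, Suc (2*n)}" by auto
    then show ?thesis by (simp add: h0_min)
  qed
  ultimately have s: "summable (\<lambda>n. 1 / real (Suc (Suc (2*n))))" by simp
  have "summable (\<lambda>n. 1 / real (Suc n))"
  proof (rule summable_comparison_test'[where g="\<lambda>n. 2 * (1 / real (Suc (Suc (2*n))))"])
    show "summable (\<lambda>n. 2 * (1 / real (Suc (Suc (2*n)))))" using s by (rule summable_mult)
    fix n :: nat
    show "norm (1 / real (Suc n)) \<le> 2 * (1 / real (Suc (Suc (2*n))))"
      by (simp add: field_simps)
  qed
  then show False using harm_not_summable by simp
qed

definition aE :: "nat set \<Rightarrow> nat \<Rightarrow> rat" where
  "aE E = aEg E h0"

lemma aE_Scc:
  assumes E: "infinite E"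
  shows "aE E \<in> Scc"
proof -
  have s: "summable (\<lambda>i. real_of_rat (aE E i))"
    unfolding aE_def by (rule aEg_summable[OF E h0_summable])
  have m1: "\<not> summable (\<lambda>i. max 0 (real_of_rat (aE E i)))"
    unfolding aE_def aEg_max
    by (rule aEg_not_summable[OF E]) (use h0_max_ns in \<open>auto simp: of_rat_max0\<close>)
  have m2: "\<not> summable (\<lambda>i. min 0 (real_of_rat (aE E i)))"
  proof
    assume "summable (\<lambda>i. min 0 (real_of_rat (aE E i)))"
    then have "summable (\<lambda>i. - min 0 (real_of_rat (aE E i)))" by (rule summable_minus)
    moreover have "(\<lambda>i. - min 0 (real_of_rat (aE E i))) = (\<lambda>i. real_of_rat (aEg E (\<lambda>k. - min 0 (h0 k)) i))"
      by (auto simp: aE_def aEg_def fun_eq_iff of_rat_min0 of_rat_minus)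
    ultimately have "summable (\<lambda>i. real_of_rat (aEg E (\<lambda>k. - min 0 (h0 k)) i))" by simp
    moreover have "\<not> summable (\<lambda>i. real_of_rat (aEg E (\<lambda>k. - min 0 (h0 k)) i))"
    proof (rule aEg_not_summable[OF E])
      show "\<And>k. 0 \<le> real_of_rat (- min 0 (h0 k))" by (simp add: of_rat_minus of_rat_min0)
      show "\<not> summable (\<lambda>k. real_of_rat (- min 0 (h0 k)))"
        using h0_min_ns summable_minus_iff[of "\<lambda>k. real_of_rat (min 0 (h0 k))"]
        by (simp add: of_rat_minus)
    qed
    ultimately show False by simp
  qed
  show ?thesis unfolding Scc_def using s m1 m2 summable_LIMSEQ_zero[OF s] by simp
qed

lemma TT_const2:
  assumes "\<And>i. B \<le> i \<Longrightarrow> i \<in> Y \<Longrightarrow> a i = 0" "B \<le> N"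
  shows "TT Y a N = TT Y a B"
  using assms(2)
proof (induction N rule: dec_induct)
  case base
  then show ?case by simp
next
  case (step n)
  then show ?case using assms(1)[of n] by (simp add: TT_Suc)
qed

lemma summable_from_TT:
  assumes Z: "infinite Z" and lim: "TT Z a \<longlonglongrightarrow> l"
  shows "summable (subseq_terms Z a)"
proof -
  have "(\<lambda>n. TT Z a (enumerate Z n)) \<longlonglongrightarrow> l"
    using LIMSEQ_subseq_LIMSEQ[OF lim strict_mono_enumerate[OF Z]] by (simp add: o_def)
  then have "partial_sums (subseq_terms Z a) \<longlonglongrightarrow> l"
    using TT_at_enum[OF Z] by simp
  then have "subseq_terms Z a sums l" by (simp add: sums_def partial_sums_def[abs_def])
  then show ?thesis by (auto simp: summable_def)
qed

lemma finite_inter_summable: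
  assumes Z: "infinite Z" and fin: "finite (Z \<inter> E)"
  shows "summable (subseq_terms Z (aE E))"
proof (rule summable_finite)
  show "finite (enumerate Z -` (Z \<inter> E))"
    using fin inj_enumerate[OF Z] by (rule finite_vimageI)
  fix n assume "n \<notin> enumerate Z -` (Z \<inter> E)"
  then have "enumerate Z n \<notin> E" using enumerate_in_set[OF Z] by auto
  then show "subseq_terms Z (aE E) n = 0" by (simp add: subseq_terms_def aE_def aEg_def)
qed

lemma split_lemma:
  assumes E: "infinite E" and Z: "infinite Z" and div: "sub_diverges Z (aE E)"
  shows "infinite (Z \<inter> E) \<and> infinite (E - Z)"
proof
  show "infinite (Z \<inter> E)"
    using finite_inter_summable[OF Z] div unfolding sub_diverges_def by blast
  show "infinite (E - Z)"
  proof
    assume "finite (E - Z)"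
    then obtain B where B: "E - Z \<subseteq> {..<B}" using finite_bound by blast
    have sa: "summable (\<lambda>i. real_of_rat (aE E i))" using aE_Scc[OF E] by (simp add: Scc_def)
    obtain s where s: "(\<lambda>i. real_of_rat (aE E i)) sums s" using sa summable_def by blast
    then have "SS (aE E) \<longlonglongrightarrow> s" by (simp add: sums_def SS_def[abs_def])
    then have lim: "(\<lambda>N. SS (aE E) N - TT (- Z) (aE E) B) \<longlonglongrightarrow> s - TT (- Z) (aE E) B"
      by (intro tendsto_intros)
    have c: "TT (- Z) (aE E) N = TT (- Z) (aE E) B" if "B \<le> N" for N
    proof (rule TT_const2[OF _ that])
      fix i assume "B \<le> i" "i \<in> - Z"
      then have "i \<notin> E" using B by auto
      then show "aE E i = 0" by (simp add: aE_def aEg_def)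
    qed
    have ev: "eventually (\<lambda>N. TT Z (aE E) N = SS (aE E) N - TT (- Z) (aE E) B) sequentially"
      unfolding eventually_sequentially
      using TT_compl[of Z "aE E"] c by (metis add_diff_cancel_right')
    have "TT Z (aE E) \<longlonglongrightarrow> s - TT (- Z) (aE E) B"
      using tendsto_cong[OF ev] lim by simp
    then have "summable (subseq_terms Z (aE E))" by (rule summable_from_TT[OF Z])
    then show False using div unfolding sub_diverges_def by blast
  qed
qed


lemma dirichlet_bound:
  fixes b w :: "nat \<Rightarrow> real"
  assumes bnd: "\<And>n. \<bar>\<Sum>k<n. b k\<bar> \<le> M"
    and wm: "\<And>n. w (Suc n) \<le> w n" and wn: "\<And>n. 0 \<le> w n"
    and mN: "m \<le> N"
  shows "\<bar>(\<Sum>k\<in>{m..<N}. b k * w k)\<bar> \<le> 2 * M * w m"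
proof -
  have anti: "w j \<le> w i" if "i \<le> j" for i j
    using that
  proof (induction j rule: dec_induct)
    case base then show ?case by simp
  next
    case (step k) then show ?case using wm[of k] by linarith
  qed
  define C where "C n = (\<Sum>k\<in>{m..<n}. b k)" for n
  have Cb: "\<bar>C n\<bar> \<le> 2 * M" if "m \<le> n" for n
  proof -
    have "C n = (\<Sum>k<n. b k) - (\<Sum>k<m. b k)"
      unfolding C_def lessThan_atLeast0 using sum_diff_nat_ivl[of 0 m n b] that by simp
    then show ?thesis using bnd[of n] bnd[of m] by linarith
  qed
  have M0: "0 \<le> M" using bnd[of 0] by simp
  have main: "\<bar>(\<Sum>k\<in>{m..<n}. b k * w k) - C n * w n\<bar> \<le> 2 * M * (w m - w n)" if "m \<le> n" for n
    using that
  proof (induction n rule: dec_induct)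
    case base
    then show ?case by (simp add: C_def)
  next
    case (step n)
    have e: "(\<Sum>k\<in>{m..<Suc n}. b k * w k) - C (Suc n) * w (Suc n)
        = ((\<Sum>k\<in>{m..<n}. b k * w k) - C n * w n) + C (Suc n) * (w n - w (Suc n))"
      using step(1) by (simp add: C_def algebra_simps)
    have B2: "\<bar>C (Suc n) * (w n - w (Suc n))\<bar> \<le> 2 * M * (w n - w (Suc n))"
    proof -
      have "\<bar>C (Suc n) * (w n - w (Suc n))\<bar> = \<bar>C (Suc n)\<bar> * (w n - w (Suc n))"
        using wm[of n] by (simp add: abs_mult)
      also have "\<dots> \<le> 2 * M * (w n - w (Suc n))"
        using Cb[of "Suc n"] step(1) wm[of n] by (intro mult_right_mono) auto
      finally show ?thesis .
    qed
    have "\<bar>((\<Sum>k\<in>{m..<n}. b k * w k) - C n * w n) + C (Suc n) * (w n - w (Suc n))\<bar>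
        \<le> \<bar>(\<Sum>k\<in>{m..<n}. b k * w k) - C n * w n\<bar> + \<bar>C (Suc n) * (w n - w (Suc n))\<bar>"
      by (rule abs_triangle_ineq)
    also have "\<dots> \<le> 2 * M * (w m - w n) + 2 * M * (w n - w (Suc n))"
      using step(3) B2 by (rule add_mono)
    also have "\<dots> = 2 * M * (w m - w (Suc n))" by (simp add: algebra_simps)
    finally show ?case unfolding e .
  qed
  have "\<bar>C N * w N\<bar> \<le> 2 * M * w N"
    using Cb[OF mN] wn[of N] by (simp add: abs_mult mult_right_mono)
  have "\<bar>(\<Sum>k\<in>{m..<N}. b k * w k)\<bar> = \<bar>((\<Sum>k\<in>{m..<N}. b k * w k) - C N * w N) + C N * w N\<bar>"
    by simp
  also have "\<dots> \<le> \<bar>(\<Sum>k\<in>{m..<N}. b k * w k) - C N * w N\<bar> + \<bar>C N * w N\<bar>"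
    by (rule abs_triangle_ineq)
  also have "\<dots> \<le> 2 * M * (w m - w N) + 2 * M * w N"
    using main[OF mN] \<open>\<bar>C N * w N\<bar> \<le> 2 * M * w N\<close> by (rule add_mono)
  also have "\<dots> = 2 * M * w m" by (simp add: algebra_simps)
  finally show ?thesis .
qed

lemma dirichlet:
  fixes b w :: "nat \<Rightarrow> real"
  assumes bnd: "\<And>n. \<bar>\<Sum>k<n. b k\<bar> \<le> M"
    and wm: "\<And>n. w (Suc n) \<le> w n" and wn: "\<And>n. 0 \<le> w n"
    and w0: "w \<longlonglongrightarrow> 0"
  shows "summable (\<lambda>n. b n * w n)"
  unfolding summable_Cauchy
proof (intro allI impI)
  fix e :: real assume e: "0 < e"
  have M0: "0 \<le> M" using bnd[of 0] by simp
  have "0 < e / (2 * M + 1)" using e M0 by simp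
  then obtain N0 where N0: "\<And>m. m \<ge> N0 \<Longrightarrow> \<bar>w m\<bar> < e / (2 * M + 1)"
    using w0 unfolding LIMSEQ_def dist_real_def by auto
  show "\<exists>N. \<forall>m\<ge>N. \<forall>n. norm (\<Sum>k\<in>{m..<n}. b k * w k) < e"
  proof (intro exI allI impI)
    fix m n assume m: "N0 \<le> m"
    show "norm (\<Sum>k\<in>{m..<n}. b k * w k) < e"
    proof (cases "m \<le> n")
      case True
      have "\<bar>\<Sum>k\<in>{m..<n}. b k * w k\<bar> \<le> 2 * M * w m"
        using bnd wm wn True by (rule dirichlet_bound[of b M w m n])
      also have "\<dots> \<le> (2 * M + 1) * w m" using wn[of m] by (simp add: mult_right_mono)
      also have "\<dots> < (2 * M + 1) * (e / (2 * M + 1))"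
        using N0[OF m] wn[of m] M0 by (intro mult_strict_left_mono) auto
      also have "\<dots> = e" using M0 by simp
      finally show ?thesis by simp
    next
      case False
      then show ?thesis using e by simp
    qed
  qed
qed


definition Dn :: "(nat \<Rightarrow> rat) \<Rightarrow> nat \<Rightarrow> rat" where
  "Dn a i = 1 + (\<Sum>j\<le>i. \<bar>a j\<bar>)"

definition star :: "(nat \<Rightarrow> rat) \<Rightarrow> nat \<Rightarrow> rat" where
  "star a i = a i / Dn a i"

definition wgt :: "(nat \<Rightarrow> rat) \<Rightarrow> nat \<Rightarrow> real" where
  "wgt a i = 1 / (1 + (\<Sum>j\<le>i. real_of_rat \<bar>a j\<bar>))"

lemma Dn_real: "real_of_rat (Dn a i) = 1 + (\<Sum>j\<le>i. real_of_rat \<bar>a j\<bar>)"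
  unfolding Dn_def by (simp add: of_rat_add of_rat_sum)

lemma star_real: "real_of_rat (star a i) = real_of_rat (a i) * wgt a i"
proof -
  have "real_of_rat (star a i) = real_of_rat (a i) / real_of_rat (Dn a i)"
    by (simp add: star_def of_rat_divide)
  also have "\<dots> = real_of_rat (a i) * wgt a i"
    unfolding Dn_real wgt_def by simp
  finally show ?thesis .
qed

lemma wgt_pos: "0 < wgt a i"
  unfolding wgt_def by (simp add: add_pos_nonneg sum_nonneg)

lemma wgt_mono: "wgt a (Suc i) \<le> wgt a i"
  unfolding wgt_def
  by (rule divide_left_mono) (auto simp: add_pos_nonneg sum_nonneg)

lemma unbounded_nonneg:
  fixes p :: "nat \<Rightarrow> real"
  assumes nn: "\<And>k. 0 \<le> p k" and ns: "\<not> summable p"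
  shows "\<exists>n. K < (\<Sum>k<n. p k)"
proof (rule ccontr)
  assume "\<not> ?thesis"
  then have "\<And>n. (\<Sum>k\<le>n. p k) \<le> K" by (metis lessThan_Suc_atMost not_less)
  then have "summable p" by (intro bounded_imp_summable[OF nn])
  then show False using ns by simp
qed

lemma abs_not_summable:
  assumes "a \<in> Scc"
  shows "\<not> summable (\<lambda>i. real_of_rat \<bar>a i\<bar>)"
proof
  assume "summable (\<lambda>i. real_of_rat \<bar>a i\<bar>)"
  then have "summable (\<lambda>i. max 0 (real_of_rat (a i)))"
    by (rule summable_comparison_test'[where N=0]) (auto simp del: abs_of_rat simp: abs_of_rat[symmetric])
  then show False using assms by (simp add: Scc_def)
qed

lemma wgt_lim:
  assumes "a \<in> Scc"
  shows "wgt a \<longlonglongrightarrow> 0"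
proof -
  have "filterlim (\<lambda>i. 1 + (\<Sum>j\<le>i. real_of_rat \<bar>a j\<bar>)) at_top sequentially"
    unfolding filterlim_at_top eventually_sequentially
  proof
    fix Z :: real
    obtain n where n: "Z < (\<Sum>k<n. real_of_rat \<bar>a k\<bar>)"
      using unbounded_nonneg[OF _ abs_not_summable[OF assms]] by auto
    show "\<exists>N. \<forall>i\<ge>N. Z \<le> 1 + (\<Sum>j\<le>i. real_of_rat \<bar>a j\<bar>)"
    proof (intro exI allI impI)
      fix i assume "n \<le> i"
      then have "(\<Sum>k<n. real_of_rat \<bar>a k\<bar>) \<le> (\<Sum>j\<le>i. real_of_rat \<bar>a j\<bar>)"
        by (intro sum_mono2) auto
      then show "Z \<le> 1 + (\<Sum>j\<le>i. real_of_rat \<bar>a j\<bar>)" using n by linarith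
    qed
  qed
  then have "(\<lambda>i. inverse (1 + (\<Sum>j\<le>i. real_of_rat \<bar>a j\<bar>))) \<longlonglongrightarrow> 0"
    by (rule tendsto_inverse_0_at_top)
  then show ?thesis by (simp add: wgt_def[abs_def] divide_inverse)
qed

lemma partial_bounded:
  assumes "summable (f :: nat \<Rightarrow> real)"
  shows "\<exists>C\<ge>0. \<forall>n. \<bar>\<Sum>k<n. f k\<bar> \<le> C"
proof -
  have "convergent (\<lambda>n. \<Sum>k<n. f k)"
    using assms by (simp add: summable_iff_convergent)
  then have "Bseq (\<lambda>n. \<Sum>k<n. f k)" by (rule convergent_imp_Bseq)
  then obtain K where "K > 0" "\<And>n. norm (\<Sum>k<n. f k) \<le> K" by (auto simp: Bseq_def)
  then show ?thesis by (intro exI[of _ K]) auto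
qed

lemma star_summable:
  assumes "a \<in> Scc"
  shows "summable (\<lambda>i. real_of_rat (star a i))"
proof -
  obtain C where C: "\<And>n. \<bar>\<Sum>k<n. real_of_rat (a k)\<bar> \<le> C"
    using partial_bounded[of "\<lambda>i. real_of_rat (a i)"] assms by (auto simp: Scc_def)
  show ?thesis unfolding star_real
    by (rule dirichlet[OF C wgt_mono less_imp_le[OF wgt_pos] wgt_lim[OF assms]])
qed

lemma star_max_ns:
  assumes aS: "a \<in> Scc"
  shows "\<not> summable (\<lambda>i. max 0 (real_of_rat (star a i)))"
proof
  assume sm: "summable (\<lambda>i. max 0 (real_of_rat (star a i)))"
  define p where "p i = max 0 (real_of_rat (a i))" for i
  define P where "P n = (\<Sum>i<n. p i)" for n
  have pnn: "0 \<le> p i" for i by (simp add: p_def)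
  obtain C where C0: "C \<ge> 0" and C: "\<And>n. \<bar>\<Sum>k<n. real_of_rat (a k)\<bar> \<le> C"
    using partial_bounded[of "\<lambda>i. real_of_rat (a i)"] aS by (auto simp: Scc_def)
  have eqm: "max 0 (real_of_rat (star a i)) = p i * wgt a i" for i
  proof (cases "0 \<le> real_of_rat (a i)")
    case True
    then show ?thesis unfolding star_real p_def using wgt_pos[of a i] by simp
  next
    case False
    then have "real_of_rat (a i) * wgt a i \<le> 0" using wgt_pos[of a i]
      by (simp add: mult_nonpos_nonneg)
    then show ?thesis unfolding star_real p_def using False by simp
  qed
  obtain N where N: "\<And>m n. m \<ge> N \<Longrightarrow> norm (\<Sum>i\<in>{m..<n}. max 0 (real_of_rat (star a i))) < 1/4"
  proof -
    have "(0::real) < 1/4" by simp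
    then show ?thesis using sm that unfolding summable_Cauchy by blast
  qed
  have pns: "\<not> summable p" using aS by (simp add: Scc_def p_def[abs_def])
  obtain n where n: "1 + C + 4 * P N < P n"
    using unbounded_nonneg[OF pnn pns] unfolding P_def by blast
  have PN: "0 \<le> P N" unfolding P_def by (simp add: sum_nonneg pnn)
  have "N < n"
  proof (rule ccontr)
    assume "\<not> N < n"
    then have "P n \<le> P N" unfolding P_def by (intro sum_mono2) (auto simp: pnn)
    then show False using n C0 PN by linarith
  qed
  define \<omega> where "\<omega> = 1 / (1 + 2 * P n + C)"
  have om: "0 < \<omega>" unfolding \<omega>_def using C0 PN n by (simp add: add_pos_nonneg)
  have absum: "(\<Sum>j<n. real_of_rat \<bar>a j\<bar>) = 2 * P n - (\<Sum>j<n. real_of_rat (a j))"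
    unfolding P_def p_def by (simp add: sum_subtractf[symmetric] sum_distrib_left) (rule sum.cong; auto simp: max_def of_rat_minus)
  have wlow: "\<omega> \<le> wgt a i" if "i < n" for i
  proof -
    define t where "t = (\<Sum>j\<le>i. real_of_rat \<bar>a j\<bar>)"
    have t0: "0 \<le> t" unfolding t_def by (rule sum_nonneg) simp
    have "t \<le> (\<Sum>j<n. real_of_rat \<bar>a j\<bar>)"
      unfolding t_def using that by (intro sum_mono2) auto
    also have "\<dots> \<le> 2 * P n + C" using absum C[of n] by linarith
    finally have tle: "1 + t \<le> 1 + 2 * P n + C" by simp
    have pos: "0 < (1 + 2 * P n + C) * (1 + t)"
      using t0 C0 PN n by (intro mult_pos_pos) linarith+
    have "1 / (1 + 2 * P n + C) \<le> 1 / (1 + t)"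
      by (rule divide_left_mono[OF tle _ pos]) simp
    then show ?thesis unfolding \<omega>_def wgt_def t_def .
  qed
  have "(\<Sum>i\<in>{N..<n}. p i * \<omega>) \<le> (\<Sum>i\<in>{N..<n}. max 0 (real_of_rat (star a i)))"
    unfolding eqm by (intro sum_mono mult_left_mono) (auto simp: wlow pnn)
  moreover have "(\<Sum>i\<in>{N..<n}. p i * \<omega>) = (P n - P N) * \<omega>"
    unfolding P_def using \<open>N < n\<close> sum_diff_nat_ivl[of 0 N n p]
    by (simp add: sum_distrib_right[symmetric] lessThan_atLeast0)
  moreover have "1/4 \<le> (P n - P N) * \<omega>"
  proof -
    have "1 + 2 * P n + C \<le> 4 * (P n - P N)" using n PN C0 by (simp add: algebra_simps)
    moreover have D0: "0 < 1 + 2 * P n + C" using C0 PN n by linarith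
    ultimately have "1/4 \<le> (P n - P N) / (1 + 2 * P n + C)"
      by (simp add: le_divide_eq)
    then show ?thesis unfolding \<omega>_def by simp
  qed
  ultimately have "1/4 \<le> (\<Sum>i\<in>{N..<n}. max 0 (real_of_rat (star a i)))" by linarith
  then show False using N[of N n] by simp
qed

lemma star_neg: "star (neg a) = neg (star a)"
  unfolding star_def neg_def Dn_def by (auto simp: fun_eq_iff)

lemma star_Scc:
  assumes aS: "a \<in> Scc"
  shows "star a \<in> Scc"
proof -
  have s: "summable (\<lambda>i. real_of_rat (star a i))" by (rule star_summable[OF aS])
  have m1: "\<not> summable (\<lambda>i. max 0 (real_of_rat (star a i)))" by (rule star_max_ns[OF aS])
  have m2': "\<not> summable (\<lambda>i. max 0 (real_of_rat (star (neg a) i)))"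
    by (rule star_max_ns[OF Scc_neg[OF aS]])
  have e: "(\<lambda>i. max 0 (real_of_rat (star (neg a) i))) = (\<lambda>i. - min 0 (real_of_rat (star a i)))"
    unfolding star_neg by (auto simp: neg_def of_rat_minus fun_eq_iff max_def min_def)
  have m2: "\<not> summable (\<lambda>i. min 0 (real_of_rat (star a i)))"
    using m2' unfolding e by (simp add: summable_minus_iff)
  show ?thesis unfolding Scc_def using s m1 m2 summable_LIMSEQ_zero[OF s] by simp
qed


lemma wgt_anti: "i \<le> j \<Longrightarrow> wgt a j \<le> wgt a i"
  unfolding wgt_def
  by (rule divide_left_mono) (auto intro!: sum_mono2 add_pos_nonneg sum_nonneg mult_pos_pos)

lemma star_unbounded:
  assumes aS: "a \<in> Scc" and X: "infinite X" and div: "sub_diverges X (star a)"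
  shows "\<exists>a'. (a' = a \<or> a' = neg a) \<and> (\<forall>M. \<exists>N. M \<le> TT X a' N)"
proof (rule ccontr)
  assume "\<not> ?thesis"
  then have h1: "\<not> (\<forall>M. \<exists>N. M \<le> TT X a N)" and h2: "\<not> (\<forall>M. \<exists>N. M \<le> TT X (neg a) N)"
    by blast+
  from h1 obtain M1 where M1: "\<And>N. TT X a N < M1" by (auto simp: not_le)
  from h2 obtain M2 where M2: "\<And>N. TT X (neg a) N < M2" by (auto simp: not_le)
  define M where "M = max \<bar>M1\<bar> \<bar>M2\<bar>"
  have bnd: "\<bar>\<Sum>k<n. real_of_rat (a (enumerate X k))\<bar> \<le> M" for n
  proof -
    have "(\<Sum>k<n. real_of_rat (a (enumerate X k))) = TT X a (enumerate X n)"
      using TT_at_enum[OF X, of a n] by (simp add: partial_sums_def subseq_terms_def)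
    moreover have "TT X a (enumerate X n) < M1" by (rule M1)
    moreover have "- TT X a (enumerate X n) < M2" using M2[of "enumerate X n"] by (simp add: TT_neg)
    ultimately show ?thesis unfolding M_def by linarith
  qed
  have wm: "wgt a (enumerate X (Suc n)) \<le> wgt a (enumerate X n)" for n
    by (rule wgt_anti) (simp add: X)
  have w0: "(\<lambda>n. wgt a (enumerate X n)) \<longlonglongrightarrow> 0"
    using LIMSEQ_subseq_LIMSEQ[OF wgt_lim[OF aS] strict_mono_enumerate[OF X]] by (simp add: o_def)
  have "summable (\<lambda>n. real_of_rat (a (enumerate X n)) * wgt a (enumerate X n))"
    by (rule dirichlet[OF bnd wm less_imp_le[OF wgt_pos] w0])
  then have "summable (subseq_terms X (star a))"
    by (simp add: subseq_terms_def star_real)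
  then show False using div by (simp add: sub_diverges_def)
qed

definition fhat :: "(nat \<Rightarrow> nat) \<Rightarrow> nat \<Rightarrow> nat" where
  "fhat f x = x + 1 + (\<Sum>i\<le>x. f i)"

primrec xs :: "(nat \<Rightarrow> nat) \<Rightarrow> nat \<Rightarrow> nat" where
  "xs f 0 = 0"
| "xs f (Suc n) = fhat f (xs f n)"

definition Ym :: "nat set \<Rightarrow> (nat \<Rightarrow> nat) \<Rightarrow> nat set \<Rightarrow> nat set" where
  "Ym X f Z = {i. \<exists>n. xs f n \<le> i \<and> i < xs f (Suc n) \<and> (xs f n \<in> Z \<longleftrightarrow> i \<in> X)}"

lemma fhat_mono: "x \<le> y \<Longrightarrow> fhat f x \<le> fhat f y"
  unfolding fhat_def by (intro add_mono sum_mono2) auto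

lemma fhat_gt: "x < fhat f x"
  unfolding fhat_def by simp

lemma f_le_fhat: "f x \<le> fhat f x"
proof -
  have "f x \<le> (\<Sum>i\<le>x. f i)" by (rule member_le_sum) auto
  then show ?thesis unfolding fhat_def by simp
qed

lemma xs_smono: "strict_mono (xs f)"
  by (rule strict_monoI_Suc) (simp add: fhat_gt)

lemma xs_ge: "n \<le> xs f n"
  using strict_mono_imp_increasing[OF xs_smono] by simp

lemma xs_interval: "\<exists>n. xs f n \<le> i \<and> i < xs f (Suc n)"
proof -
  have ex: "\<exists>n. i < xs f n" using xs_ge[of "Suc i" f] by (intro exI[of _ "Suc i"]) simp
  define n' where "n' = (LEAST n. i < xs f n)"
  have n': "i < xs f n'" unfolding n'_def by (rule LeastI_ex[OF ex])
  have "n' \<noteq> 0" using n' by (cases n') auto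
  then obtain n where n: "n' = Suc n" by (cases n') auto
  have "\<not> i < xs f n" using n unfolding n'_def by (metis lessI not_less_Least)
  then show ?thesis using n n' by (intro exI[of _ n]) auto
qed

lemma xs_interval_unique:
  assumes "xs f n \<le> i" "i < xs f (Suc n)" "xs f m \<le> i" "i < xs f (Suc m)"
  shows "m = n"
proof (rule ccontr)
  assume "m \<noteq> n"
  then consider "m < n" | "n < m" by linarith
  then show False
  proof cases
    case 1
    then have "xs f (Suc m) \<le> xs f n" using strict_mono_less_eq[OF xs_smono[of f], of "Suc m" n] Suc_leI by blast
    then show False using assms by linarith
  next
    case 2
    then have "xs f (Suc n) \<le> xs f m" using strict_mono_less_eq[OF xs_smono[of f], of "Suc n" m] Suc_leI by blast
    then show False using assms by linarith
  qed
qed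

lemma Ym_iff:
  assumes "xs f n \<le> i" "i < xs f (Suc n)"
  shows "i \<in> Ym X f Z \<longleftrightarrow> (xs f n \<in> Z \<longleftrightarrow> i \<in> X)"
proof
  assume "i \<in> Ym X f Z"
  then obtain m where m: "xs f m \<le> i" "i < xs f (Suc m)" "xs f m \<in> Z \<longleftrightarrow> i \<in> X"
    unfolding Ym_def by blast
  have "m = n" by (rule xs_interval_unique[OF assms m(1,2)])
  then show "xs f n \<in> Z \<longleftrightarrow> i \<in> X" using m(3) by simp
next
  assume "xs f n \<in> Z \<longleftrightarrow> i \<in> X"
  then show "i \<in> Ym X f Z" unfolding Ym_def using assms by blast
qed

lemma orbit_long:
  assumes g: "mono g" and nb: "\<not> le_star f (\<lambda>x. g (g x))"
  shows "\<exists>n\<ge>n0. g (xs f n) \<le> xs f (Suc n)"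
proof -
  have "\<exists>\<^sub>F m in sequentially. \<not> f m \<le> g (g m)"
    using nb unfolding le_star_def by (simp add: not_eventually)
  then obtain m where m: "m \<ge> xs f n0" "g (g m) < f m"
    unfolding frequently_sequentially by (meson not_le)
  obtain n where n: "xs f n \<le> m" "m < xs f (Suc n)" using xs_interval by blast
  have "xs f n0 < xs f (Suc n)" using m(1) n(2) by linarith
  then have "n0 < Suc n" using strict_mono_less[OF xs_smono[of f], of n0 "Suc n"] by blast
  then have nn0: "n0 \<le> n" by simp
  show ?thesis
  proof (cases "g (xs f n) \<le> xs f (Suc n)")
    case True
    then show ?thesis using nn0 by blast
  next
    case False
    then have a: "xs f (Suc n) < g (xs f n)" by simp
    have "g (xs f n) \<le> g m" using g n(1) by (simp add: monoD)
    then have b: "xs f (Suc n) \<le> g m" using a by simp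
    have "xs f (Suc (Suc n)) = fhat f (xs f (Suc n))" by simp
    also have "\<dots> \<ge> fhat f m" using n(2) by (intro fhat_mono) simp
    finally have "f m \<le> xs f (Suc (Suc n))" using f_le_fhat[of f m] by linarith
    moreover have "g (xs f (Suc n)) \<le> g (g m)" using g b by (simp add: monoD)
    ultimately have "g (xs f (Suc n)) \<le> xs f (Suc (Suc n))" using m(2) by linarith
    then show ?thesis using nn0 by (intro exI[of _ "Suc n"]) auto
  qed
qed

lemma TT_agree:
  assumes "\<And>i. k \<le> i \<Longrightarrow> i < N \<Longrightarrow> (i \<in> Y \<longleftrightarrow> i \<in> W)" "k \<le> N"
  shows "TT Y a N - TT Y a k = TT W a N - TT W a k"
  using assms(2,1)
proof (induction N rule: dec_induct)
  case base
  then show ?case by simp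
next
  case (step n)
  have "n \<in> Y \<longleftrightarrow> n \<in> W" using step(1,2) step(4)[of n] by simp
  moreover have "TT Y a n - TT Y a k = TT W a n - TT W a k" using step by simp
  ultimately show ?case by (simp add: TT_Suc)
qed

definition AA :: "(nat \<Rightarrow> rat) \<Rightarrow> nat \<Rightarrow> real" where
  "AA a N = (\<Sum>i<N. real_of_rat \<bar>a i\<bar>)"

lemma TT_abs: "\<bar>TT Y a N\<bar> \<le> AA a N"
  unfolding TT_def AA_def
  by (rule order_trans[OF sum_abs]) (intro sum_mono; auto simp del: abs_of_rat simp: abs_of_rat[symmetric])

lemma AA_mono: "k \<le> N \<Longrightarrow> AA a k \<le> AA a N"
  unfolding AA_def by (intro sum_mono2) auto


definition QQ :: "(nat \<Rightarrow> rat) \<Rightarrow> nat set \<Rightarrow> real \<Rightarrow> (nat \<Rightarrow> nat) \<Rightarrow> bool" where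
  "QQ a X C g \<longleftrightarrow> (\<forall>k. \<exists>N. k < N \<and> N < g k \<and> AA a k + 2*C + 1 \<le> TT X a N - TT X a k)"

lemma AA_nonneg: "0 \<le> AA a k"
  unfolding AA_def by (rule sum_nonneg) simp

lemma g_exists:
  assumes unb: "\<forall>M. \<exists>N. M \<le> TT X a N" and C0: "0 \<le> C"
  shows "\<exists>g. mono g \<and> QQ a X C g"
proof -
  define thr where "thr k = 3 * AA a k + 2*C + 2" for k
  define L where "L k = (LEAST N. thr k \<le> TT X a N)" for k
  have ex: "\<exists>N. thr k \<le> TT X a N" for k using unb by blast
  have LI: "thr k \<le> TT X a (L k)" for k unfolding L_def by (rule LeastI_ex[OF ex])
  have thr_mono: "thr k \<le> thr k'" if "k \<le> k'" for k k'
    unfolding thr_def using AA_mono[OF that, of a] by simp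
  have "mono (\<lambda>k. Suc (L k))"
  proof (rule monoI)
    fix k k' :: nat assume "k \<le> k'"
    then have "thr k \<le> TT X a (L k')" using thr_mono LI[of k'] by (meson order_trans)
    then have "L k \<le> L k'" unfolding L_def by (rule Least_le)
    then show "Suc (L k) \<le> Suc (L k')" by simp
  qed
  moreover have "QQ a X C (\<lambda>k. Suc (L k))"
    unfolding QQ_def
  proof
    fix k
    have kN: "k < L k"
    proof (rule ccontr)
      assume "\<not> k < L k"
      then have "TT X a (L k) \<le> AA a k"
        using TT_abs[of X a "L k"] AA_mono[of "L k" k a] by linarith
      then show False using LI[of k] AA_nonneg[of a k] C0 unfolding thr_def by linarith
    qed
    have "AA a k + 2*C + 1 \<le> TT X a (L k) - TT X a k"
      using LI[of k] TT_abs[of X a k] AA_nonneg[of a k] unfolding thr_def by linarith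
    then show "\<exists>N. k < N \<and> N < Suc (L k) \<and> AA a k + 2*C + 1 \<le> TT X a N - TT X a k"
      using kN by blast
  qed
  ultimately show ?thesis by blast
qed

lemma osc_step:
  assumes C: "\<And>n. \<bar>SS a n\<bar> \<le> C" and Q: "QQ a X C g"
    and long: "g (xs f n) \<le> xs f (Suc n)"
  shows "\<exists>N\<ge>xs f n. (xs f n \<in> Z \<longrightarrow> 1 \<le> TT (Ym X f Z) a N)
                     \<and> (xs f n \<notin> Z \<longrightarrow> TT (Ym X f Z) a N \<le> -1)"
proof -
  define k where "k = xs f n"
  define Y where "Y = Ym X f Z"
  obtain N where N: "k < N" "N < g k" "AA a k + 2*C + 1 \<le> TT X a N - TT X a k"
    using Q unfolding QQ_def by blast
  have Nx: "N \<le> xs f (Suc n)" using N(2) long unfolding k_def by linarith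
  have iff: "i \<in> Y \<longleftrightarrow> (k \<in> Z \<longleftrightarrow> i \<in> X)" if "k \<le> i" "i < N" for i
    unfolding Y_def k_def using Ym_iff[of f n i X Z] that Nx k_def by auto
  have Yk: "\<bar>TT Y a k\<bar> \<le> AA a k" by (rule TT_abs)
  have p1: "k \<in> Z \<longrightarrow> 1 \<le> TT Y a N"
  proof
    assume kZ: "k \<in> Z"
    have "TT Y a N - TT Y a k = TT X a N - TT X a k"
      by (rule TT_agree) (use iff kZ N(1) in auto)
    moreover have C0: "0 \<le> C" using C[of 0] by (simp add: SS_def)
    ultimately show "1 \<le> TT Y a N" using N(3) Yk by linarith
  qed
  have p2: "k \<notin> Z \<longrightarrow> TT Y a N \<le> -1"
  proof
    assume kZ: "k \<notin> Z"
    have "TT Y a N - TT Y a k = TT (- X) a N - TT (- X) a k"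
      by (rule TT_agree) (use iff kZ N(1) in auto)
    moreover have "TT (- X) a N = SS a N - TT X a N" "TT (- X) a k = SS a k - TT X a k"
      using TT_compl[of X a N] TT_compl[of X a k] by linarith+
    ultimately show "TT Y a N \<le> -1" using N(3) Yk C[of N] C[of k] by linarith
  qed
  show ?thesis using p1 p2 N(1) unfolding k_def Y_def by (intro exI[of _ N]) auto
qed

lemma core:
  assumes C: "\<And>n. \<bar>SS a n\<bar> \<le> C" and Q: "QQ a X C g" and g: "mono g"
    and nb: "\<not> le_star f (\<lambda>x. g (g x))"
  shows "\<exists>E. infinite E \<and> (\<forall>Z. infinite (Z \<inter> E) \<longrightarrow> infinite (E - Z) \<longrightarrow>
            (\<exists>\<^sub>F N in sequentially. 1 \<le> TT (Ym X f Z) a N) \<and>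
            (\<exists>\<^sub>F N in sequentially. TT (Ym X f Z) a N \<le> -1))"
proof -
  define Ln where "Ln = {n. g (xs f n) \<le> xs f (Suc n)}"
  define E where "E = xs f ` Ln"
  have "infinite Ln"
    unfolding Ln_def infinite_nat_iff_unbounded_le using orbit_long[OF g nb] by blast
  then have infE: "infinite E"
    unfolding E_def using finite_imageD strict_mono_imp_inj_on[OF xs_smono] by blast
  have "(\<exists>\<^sub>F N in sequentially. 1 \<le> TT (Ym X f Z) a N) \<and>
        (\<exists>\<^sub>F N in sequentially. TT (Ym X f Z) a N \<le> -1)"
    if Z1: "infinite (Z \<inter> E)" and Z2: "infinite (E - Z)" for Z
  proof
    show "\<exists>\<^sub>F N in sequentially. 1 \<le> TT (Ym X f Z) a N"
      unfolding frequently_sequentially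
    proof
      fix N0
      obtain e where e: "e \<in> Z \<inter> E" "N0 \<le> e"
        using Z1 unfolding infinite_nat_iff_unbounded_le by blast
      then obtain n where n: "e = xs f n" "n \<in> Ln" unfolding E_def by blast
      obtain N where N1: "N \<ge> xs f n" and N2: "xs f n \<in> Z \<longrightarrow> 1 \<le> TT (Ym X f Z) a N"
        using osc_step[OF C Q, of f n Z] n(2) unfolding Ln_def by blast
      show "\<exists>N\<ge>N0. 1 \<le> TT (Ym X f Z) a N" using N1 N2 e n by (intro exI[of _ N]) auto
    qed
    show "\<exists>\<^sub>F N in sequentially. TT (Ym X f Z) a N \<le> -1"
      unfolding frequently_sequentially
    proof
      fix N0
      obtain e where e: "e \<in> E - Z" "N0 \<le> e"
        using Z2 unfolding infinite_nat_iff_unbounded_le by blast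
      then obtain n where n: "e = xs f n" "n \<in> Ln" unfolding E_def by blast
      obtain N where N1: "N \<ge> xs f n" and N2: "xs f n \<notin> Z \<longrightarrow> TT (Ym X f Z) a N \<le> -1"
        using osc_step[OF C Q, of f n Z] n(2) unfolding Ln_def by blast
      show "\<exists>N\<ge>N0. TT (Ym X f Z) a N \<le> -1" using N1 N2 e n by (intro exI[of _ N]) auto
    qed
  qed
  then show ?thesis using infE by blast
qed


lemma main_step:
  assumes aS: "a \<in> Scc" and X: "infinite X" and div: "sub_diverges X (star a)"
  shows "\<exists>g. mono g \<and> (\<forall>f. \<not> le_star f (\<lambda>x. g (g x)) \<longrightarrow>
          (\<exists>E. infinite E \<and> (\<forall>Z. infinite (Z \<inter> E) \<longrightarrow> infinite (E - Z) \<longrightarrow>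
              Ym X f Z \<in> infcoinf \<and> sub_osc (Ym X f Z) a)))"
proof -
  obtain a' where a': "a' = a \<or> a' = neg a" and unb: "\<forall>M. \<exists>N. M \<le> TT X a' N"
    using star_unbounded[OF aS X div] by blast
  have a'S: "a' \<in> Scc" using a' aS Scc_neg by blast
  have sa: "summable (\<lambda>i. real_of_rat (a i))" using aS by (simp add: Scc_def)
  obtain C where C0: "C \<ge> 0" and C: "\<And>n. \<bar>\<Sum>k<n. real_of_rat (a' k)\<bar> \<le> C"
    using partial_bounded[of "\<lambda>i. real_of_rat (a' i)"] a'S by (auto simp: Scc_def)
  have C': "\<And>n. \<bar>SS a' n\<bar> \<le> C" using C by (simp add: SS_def)
  obtain g where g: "mono g" "QQ a' X C g" using g_exists[OF unb C0] by blast
  have "\<exists>E. infinite E \<and> (\<forall>Z. infinite (Z \<inter> E) \<longrightarrow> infinite (E - Z) \<longrightarrow>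
              Ym X f Z \<in> infcoinf \<and> sub_osc (Ym X f Z) a)"
    if nb: "\<not> le_star f (\<lambda>x. g (g x))" for f
  proof -
    obtain E where E: "infinite E" and EZ: "\<And>Z. infinite (Z \<inter> E) \<Longrightarrow> infinite (E - Z) \<Longrightarrow>
            (\<exists>\<^sub>F N in sequentially. 1 \<le> TT (Ym X f Z) a' N) \<and>
            (\<exists>\<^sub>F N in sequentially. TT (Ym X f Z) a' N \<le> -1)"
      using core[OF C' g(2) g(1) nb] by blast
    have "Ym X f Z \<in> infcoinf \<and> sub_osc (Ym X f Z) a"
      if Z1: "infinite (Z \<inter> E)" and Z2: "infinite (E - Z)" for Z
    proof -
      have fr: "(\<exists>\<^sub>F N in sequentially. 1 \<le> TT (Ym X f Z) a N) \<and>
            (\<exists>\<^sub>F N in sequentially. TT (Ym X f Z) a N \<le> -1)"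
      proof (cases "a' = a")
        case True
        then show ?thesis using EZ[OF Z1 Z2] by simp
      next
        case False
        then have "a' = neg a" using a' by blast
        then show ?thesis using EZ[OF Z1 Z2] by (simp add: TT_neg conj_commute)
      qed
      show ?thesis using final_osc[OF sa] fr by blast
    qed
    then show ?thesis using E by blast
  qed
  then show ?thesis using g(1) by blast
qed

lemma mincard_spec:
  assumes "\<exists>A. P A"
  shows "\<exists>A. P A \<and> mincard P = card_of A \<and> (\<forall>B. P B \<longrightarrow> (card_of A, card_of B) \<in> ordLeq)"
proof -
  define R where "R = {card_of B | B. P B}"
  have "R \<noteq> {}" using assms unfolding R_def by blast
  moreover have "\<forall>r\<in>R. Well_order r" unfolding R_def using card_of_Well_order by blast
  ultimately obtain r where r: "r \<in> R" "\<forall>r'\<in>R. (r, r') \<in> ordLeq"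
    using exists_minim_Well_order by blast
  then obtain A where A: "P A" "r = card_of A" unfolding R_def by blast
  have ex: "\<exists>r. \<exists>A. P A \<and> r = card_of A \<and> (\<forall>B. P B \<longrightarrow> (card_of A, card_of B) \<in> ordLeq)"
    using A r(2) unfolding R_def by blast
  show ?thesis
    using someI_ex[OF ex] unfolding mincard_def by blast
qed

lemma infcoinf_ne: "{n::nat. even n} \<in> infcoinf"
proof -
  have "infinite {n::nat. even n}"
    unfolding infinite_nat_iff_unbounded_le
  proof
    fix m :: nat show "\<exists>n\<ge>m. n \<in> {n. even n}" by (rule exI[of _ "2*m"]) auto
  qed
  moreover have "infinite (- {n::nat. even n})"
    unfolding infinite_nat_iff_unbounded_le
  proof
    fix m :: nat show "\<exists>n\<ge>m. n \<in> - {n. even n}" by (rule exI[of _ "2*m+1"]) auto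
  qed
  ultimately show ?thesis by (simp add: infcoinf_def)
qed

lemma pos_set_div:
  assumes aS: "a \<in> Scc"
  shows "{i. 0 < a i} \<in> infcoinf \<and> sub_diverges {i. 0 < a i} a"
proof -
  define Xp where "Xp = {i. 0 < a i}"
  have m1: "\<not> summable (\<lambda>i. max 0 (real_of_rat (a i)))" using aS by (simp add: Scc_def)
  have m2: "\<not> summable (\<lambda>i. min 0 (real_of_rat (a i)))" using aS by (simp add: Scc_def)
  have inf1: "infinite Xp"
  proof
    assume "finite Xp"
    then have "summable (\<lambda>i. max 0 (real_of_rat (a i)))"
      by (rule summable_finite) (auto simp: Xp_def max_def)
    then show False using m1 by simp
  qed
  have inf2: "infinite (- Xp)"
  proof
    assume fin: "finite (- Xp)"
    have "summable (\<lambda>i. min 0 (real_of_rat (a i)))"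
    proof (rule summable_finite[OF fin])
      fix i assume "i \<notin> - Xp"
      then show "min 0 (real_of_rat (a i)) = 0" by (auto simp: Xp_def min_def)
    qed
    then show False using m2 by simp
  qed
  have TTeq: "TT Xp a N = (\<Sum>i<N. max 0 (real_of_rat (a i)))" for N
    unfolding TT_def by (rule sum.cong) (auto simp: Xp_def max_def)
  have "sub_diverges Xp a"
    unfolding sub_diverges_def
  proof
    assume "summable (subseq_terms Xp a)"
    then obtain K where K: "\<And>n. \<bar>\<Sum>k<n. subseq_terms Xp a k\<bar> \<le> K"
      using partial_bounded by blast
    obtain N where N: "K < (\<Sum>i<N. max 0 (real_of_rat (a i)))"
      using unbounded_nonneg[OF _ m1] by auto
    have "TT Xp a N = partial_sums (subseq_terms Xp a) (card {i\<in>Xp. i < N})"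
      by (rule TT_enum[OF inf1])
    then have "\<bar>TT Xp a N\<bar> \<le> K" using K by (simp add: partial_sums_def)
    then show False using N TTeq by simp
  qed
  then show ?thesis using inf1 inf2 unfolding Xp_def infcoinf_def by simp
qed


lemma part1:
  assumes hyp: "(bnum, ss_io) \<in> ordLeq"
  shows "(ss_io, ss_o) \<in> ordIso"
proof -
  define Pio where "Pio = (\<lambda>\<X>. \<X> \<subseteq> infcoinf \<and> (\<forall>a\<in>Scc. \<exists>X\<in>\<X>. sub_diverges X a))"
  define Po where "Po = (\<lambda>\<X>. \<X> \<subseteq> infcoinf \<and> (\<forall>a\<in>Scc. \<exists>X\<in>\<X>. sub_osc X a))"
  define Pb where "Pb = (\<lambda>F::(nat \<Rightarrow> nat) set. \<not> (\<exists>g. \<forall>f\<in>F. le_star f g))"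
  have io: "ss_io = mincard Pio" unfolding ss_io_def Pio_def by simp
  have o: "ss_o = mincard Po" unfolding ss_o_def Po_def by simp
  have b: "bnum = mincard Pb" unfolding bnum_def Pb_def by simp
  have "Pio infcoinf" unfolding Pio_def using pos_set_div by blast
  then obtain \<X> where X: "Pio \<X>" "ss_io = card_of \<X>" "\<And>B. Pio B \<Longrightarrow> (card_of \<X>, card_of B) \<in> ordLeq"
    using mincard_spec[of Pio] io by blast
  have "Pb UNIV"
    unfolding Pb_def
  proof
    assume "\<exists>g. \<forall>f\<in>UNIV. le_star f g"
    then obtain g where "le_star (\<lambda>n. Suc (g n)) g" by blast
    then show False by (simp add: le_star_def)
  qed
  then obtain F where F: "Pb F" "bnum = card_of F"
    using mincard_spec[of Pb] b by blast
  have FX: "(card_of F, card_of \<X>) \<in> ordLeq" using hyp F(2) X(2) by simp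
  have infF: "infinite F"
  proof
    assume fin: "finite F"
    have "\<forall>f\<in>F. le_star f (\<lambda>n. \<Sum>h\<in>F. h n)"
      unfolding le_star_def using fin by (auto intro!: always_eventually member_le_sum)
    then show False using F(1) unfolding Pb_def by blast
  qed
  have infX: "infinite \<X>" using card_of_ordLeq_finite[OF FX] infF by blast
  have Fne: "F \<noteq> {}" using infF by auto
  have Xne: "\<X> \<noteq> {}" using infX by auto
  define \<Y> where "\<Y> = ((\<lambda>(X, f, Z). Ym X f Z) ` (\<X> \<times> F \<times> \<X>)) \<inter> infcoinf"
  have c1: "(card_of (F \<times> \<X>), card_of \<X>) \<in> ordIso"
    using card_of_Times_infinite[OF infX Fne FX] by blast
  have c2: "(card_of (\<X> \<times> F \<times> \<X>), card_of \<X>) \<in> ordIso"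
    using card_of_Times_infinite[OF infX _ ordIso_imp_ordLeq[OF c1]] Fne Xne by blast
  have "(card_of \<Y>, card_of ((\<lambda>(X, f, Z). Ym X f Z) ` (\<X> \<times> F \<times> \<X>))) \<in> ordLeq"
    unfolding \<Y>_def by (rule card_of_mono1) blast
  also have "(card_of ((\<lambda>(X, f, Z). Ym X f Z) ` (\<X> \<times> F \<times> \<X>)), card_of (\<X> \<times> F \<times> \<X>)) \<in> ordLeq"
    by (rule card_of_image)
  finally have cY: "(card_of \<Y>, card_of \<X>) \<in> ordLeq"
    using ordIso_imp_ordLeq[OF c2] ordLeq_transitive by blast
  have PoY: "Po \<Y>"
    unfolding Po_def
  proof
    show "\<Y> \<subseteq> infcoinf" unfolding \<Y>_def by blast
    show "\<forall>a\<in>Scc. \<exists>X\<in>\<Y>. sub_osc X a"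
    proof
      fix a assume aS: "a \<in> Scc"
      obtain X where Xin: "X \<in> \<X>" and dX: "sub_diverges X (star a)"
        using X(1) star_Scc[OF aS] unfolding Pio_def by blast
      have infXX: "infinite X" using X(1) Xin unfolding Pio_def infcoinf_def by blast
      obtain g where g: "mono g" and gP: "\<And>f. \<not> le_star f (\<lambda>x. g (g x)) \<Longrightarrow>
          (\<exists>E. infinite E \<and> (\<forall>Z. infinite (Z \<inter> E) \<longrightarrow> infinite (E - Z) \<longrightarrow>
              Ym X f Z \<in> infcoinf \<and> sub_osc (Ym X f Z) a))"
        using main_step[OF aS infXX dX] by blast
      obtain f where fF: "f \<in> F" and nb: "\<not> le_star f (\<lambda>x. g (g x))"
        using F(1) unfolding Pb_def by blast
      obtain E where E: "infinite E" and EP: "\<And>Z. infinite (Z \<inter> E) \<Longrightarrow> infinite (E - Z) \<Longrightarrow>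
              Ym X f Z \<in> infcoinf \<and> sub_osc (Ym X f Z) a"
        using gP[OF nb] by blast
      obtain Z where Zin: "Z \<in> \<X>" and dZ: "sub_diverges Z (aE E)"
        using X(1) aE_Scc[OF E] unfolding Pio_def by blast
      have infZ: "infinite Z" using X(1) Zin unfolding Pio_def infcoinf_def by blast
      have sp: "infinite (Z \<inter> E)" "infinite (E - Z)" using split_lemma[OF E infZ dZ] by blast+
      have "Ym X f Z \<in> \<Y>" unfolding \<Y>_def using EP[OF sp] Xin fF Zin by force
      then show "\<exists>X\<in>\<Y>. sub_osc X a" using EP[OF sp] by blast
    qed
  qed
  then obtain \<O> where O: "Po \<O>" "ss_o = card_of \<O>" "\<And>B. Po B \<Longrightarrow> (card_of \<O>, card_of B) \<in> ordLeq"
    using mincard_spec[of Po] o by blast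
  have "Pio \<O>" using O(1) osc_imp_div unfolding Po_def Pio_def by blast
  then have l1: "(card_of \<X>, card_of \<O>) \<in> ordLeq" by (rule X(3))
  have "(card_of \<O>, card_of \<Y>) \<in> ordLeq" by (rule O(3)[OF PoY])
  then have l2: "(card_of \<O>, card_of \<X>) \<in> ordLeq" using cY ordLeq_transitive by blast
  show ?thesis unfolding X(2) O(2) using l1 l2 ordIso_iff_ordLeq by blast
qed

lemma part2:
  assumes hyp: "(ss_io_perp, dnum) \<in> ordLeq"
  shows "(ss_io_perp, ss_o_perp) \<in> ordIso"
proof -
  define Pip where "Pip = (\<lambda>\<A>. \<A> \<subseteq> Scc \<and> \<not> (\<exists>X\<in>infcoinf. \<forall>a\<in>\<A>. sub_diverges X a))"
  define Pop where "Pop = (\<lambda>\<A>. \<A> \<subseteq> Scc \<and> \<not> (\<exists>X\<in>infcoinf. \<forall>a\<in>\<A>. sub_osc X a))"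
  define Pd where "Pd = (\<lambda>F::(nat \<Rightarrow> nat) set. \<forall>g. \<exists>f\<in>F. le_star g f)"
  have ip: "ss_io_perp = mincard Pip" unfolding ss_io_perp_def Pip_def by simp
  have op: "ss_o_perp = mincard Pop" unfolding ss_o_perp_def Pop_def by simp
  have d: "dnum = mincard Pd" unfolding dnum_def Pd_def by simp
  have nd: "\<exists>a\<in>Scc. \<not> sub_diverges X a" if "X \<in> infcoinf" for X
  proof -
    have iX: "infinite X" "infinite (- X)" using that by (auto simp: infcoinf_def)
    have "summable (subseq_terms X (aE (- X)))"
      by (rule finite_inter_summable[OF iX(1)]) simp
    then show ?thesis using aE_Scc[OF iX(2)] unfolding sub_diverges_def by blast
  qed
  have "Pip Scc" unfolding Pip_def using nd by blast
  then obtain Ai where Ai: "Pip Ai" "ss_io_perp = card_of Ai"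
      "\<And>B. Pip B \<Longrightarrow> (card_of Ai, card_of B) \<in> ordLeq"
    using mincard_spec[of Pip] ip by blast
  have "Pop Scc" unfolding Pop_def using nd osc_imp_div by blast
  then obtain Ao where Ao: "Pop Ao" "ss_o_perp = card_of Ao"
      "\<And>B. Pop B \<Longrightarrow> (card_of Ao, card_of B) \<in> ordLeq"
    using mincard_spec[of Pop] op by blast
  have "Pd UNIV" unfolding Pd_def
  proof
    fix g :: "nat \<Rightarrow> nat"
    show "\<exists>f\<in>UNIV. le_star g f" unfolding le_star_def by (rule bexI[of _ g]) auto
  qed
  then obtain Fd where Fd: "Pd Fd" "dnum = card_of Fd"
      "\<And>B. Pd B \<Longrightarrow> (card_of Fd, card_of B) \<in> ordLeq"
    using mincard_spec[of Pd] d by blast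
  have "Pop Ai" using Ai(1) osc_imp_div unfolding Pip_def Pop_def by blast
  then have l1: "(card_of Ao, card_of Ai) \<in> ordLeq" by (rule Ao(3))
  have AiFd: "(card_of Ai, card_of Fd) \<in> ordLeq" using hyp Ai(2) Fd(2) by simp
  have l2: "(card_of Ai, card_of Ao) \<in> ordLeq"
  proof (rule ccontr)
    assume "\<not> ?thesis"
    then have less: "(card_of Ao, card_of Ai) \<in> ordLess"
      using ordLess_or_ordLeq[OF card_of_Well_order card_of_Well_order] by blast
    have smallI: "\<not> Pip B" if "(card_of B, card_of Ao) \<in> ordLeq" for B :: "(nat \<Rightarrow> rat) set"
    proof
      assume "Pip B"
      then have "(card_of Ai, card_of B) \<in> ordLeq" by (rule Ai(3))
      then have "(card_of Ai, card_of Ao) \<in> ordLeq" using that ordLeq_transitive by blast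
      then show False using less not_ordLess_ordLeq by blast
    qed
    have smallD: "\<not> Pd B" if "(card_of B, card_of Ao) \<in> ordLeq" for B :: "(nat \<Rightarrow> nat) set"
    proof
      assume "Pd B"
      then have "(card_of Fd, card_of B) \<in> ordLeq" by (rule Fd(3))
      then have "(card_of Fd, card_of Ao) \<in> ordLeq" using that ordLeq_transitive by blast
      then have "(card_of Ai, card_of Ao) \<in> ordLeq" using AiFd ordLeq_transitive by blast
      then show False using less not_ordLess_ordLeq by blast
    qed
    have AoS: "Ao \<subseteq> Scc" using Ao(1) unfolding Pop_def by blast
    have "\<not> Pip (star ` Ao)" by (rule smallI[OF card_of_image])
    moreover have "star ` Ao \<subseteq> Scc" using AoS star_Scc by blast
    ultimately obtain X where Xc: "X \<in> infcoinf" and dX: "\<And>a. a \<in> Ao \<Longrightarrow> sub_diverges X (star a)"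
      unfolding Pip_def by blast
    have infXX: "infinite X" using Xc by (simp add: infcoinf_def)
    define PP where "PP a g \<longleftrightarrow> mono g \<and> (\<forall>f. \<not> le_star f (\<lambda>x. g (g x)) \<longrightarrow>
          (\<exists>E. infinite E \<and> (\<forall>Z. infinite (Z \<inter> E) \<longrightarrow> infinite (E - Z) \<longrightarrow>
              Ym X f Z \<in> infcoinf \<and> sub_osc (Ym X f Z) a)))" for a g
    define gg where "gg a = (SOME g. PP a g)" for a
    have ggP: "PP a (gg a)" if "a \<in> Ao" for a
    proof -
      have "\<exists>g. PP a g" unfolding PP_def using main_step[OF _ infXX dX[OF that]] AoS that by blast
      then show ?thesis unfolding gg_def by (rule someI_ex)
    qed
    have "\<not> Pd ((\<lambda>a. \<lambda>x. gg a (gg a x)) ` Ao)" by (rule smallD[OF card_of_image])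
    then obtain f where nb: "\<And>a. a \<in> Ao \<Longrightarrow> \<not> le_star f (\<lambda>x. gg a (gg a x))"
      unfolding Pd_def by blast
    define QE where "QE a E \<longleftrightarrow> infinite E \<and> (\<forall>Z. infinite (Z \<inter> E) \<longrightarrow> infinite (E - Z) \<longrightarrow>
              Ym X f Z \<in> infcoinf \<and> sub_osc (Ym X f Z) a)" for a E
    define EE where "EE a = (SOME E. QE a E)" for a
    have EEP: "QE a (EE a)" if "a \<in> Ao" for a
    proof -
      have "\<exists>E. QE a E" using ggP[OF that] nb[OF that] unfolding PP_def QE_def by blast
      then show ?thesis unfolding EE_def by (rule someI_ex)
    qed
    have "\<not> Pip ((\<lambda>a. aE (EE a)) ` Ao)" by (rule smallI[OF card_of_image])
    moreover have "(\<lambda>a. aE (EE a)) ` Ao \<subseteq> Scc"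
      using EEP aE_Scc unfolding QE_def by blast
    ultimately obtain Z where Zc: "Z \<in> infcoinf" and dZ: "\<And>a. a \<in> Ao \<Longrightarrow> sub_diverges Z (aE (EE a))"
      unfolding Pip_def by blast
    have infZ: "infinite Z" using Zc by (simp add: infcoinf_def)
    have good: "Ym X f Z \<in> infcoinf \<and> sub_osc (Ym X f Z) a" if "a \<in> Ao" for a
    proof -
      have q: "QE a (EE a)" by (rule EEP[OF that])
      then have "infinite (EE a)" unfolding QE_def by blast
      then have "infinite (Z \<inter> EE a) \<and> infinite (EE a - Z)"
        using split_lemma[OF _ infZ dZ[OF that]] by blast
      then show ?thesis using q unfolding QE_def by blast
    qed
    have "Ao \<noteq> {}"
    proof
      assume "Ao = {}"
      then show False using Ao(1) infcoinf_ne unfolding Pop_def by blast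
    qed
    then obtain a0 where "a0 \<in> Ao" by blast
    then have "Ym X f Z \<in> infcoinf" using good by blast
    then show False using Ao(1) good unfolding Pop_def by blast
  qed
  show ?thesis unfolding Ai(2) Ao(2) using l1 l2 ordIso_iff_ordLeq by blast
qed

theorem mainTheorem17:
  shows "((bnum, ss_io) \<in> ordLeq \<longrightarrow> (ss_io, ss_o) \<in> ordIso)
       \<and> ((ss_io_perp, dnum) \<in> ordLeq \<longrightarrow> (ss_io_perp, ss_o_perp) \<in> ordIso)"
  using part1 part2 by blast

end
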